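(* Let $L=(L^{(n)})_n$ be a family where each $L^{(n)}$ is a set of labels on $n$ qubits, with the two properties: (1) for all $\ell_1,\ell_2\in L^{(n)}$ we have $\ell_1\ell_2\notin L^{(n)}$; (2) $\lim_{n\to\infty}|L^{(n)}|/n=\infty$. Let $C=(C^{(n)})_n$ be a family of CNOT circuits for the nearest-neighbor connectivity graph such that $C^{(n)}$ generates $L^{(n)}$. Then $\mu(C,L)\geq 1+\gamma$ for some absolute constant $\gamma>0$ (independent of the families $L$ and $C$).
   Context: Qubits are indexed $1,\ldots,n$. $\mathrm{CX}_{i,j}$ ($i\neq j$) denotes the CNOT gate with control $i$ and target $j$. A CNOT circuit is a finite sequence of moments, each a set of CNOT gates acting on pairwise disjoint qubits; $\operatorname{size}(C)$ is its total number of gates. It is for the nearest-neighbor connectivity graph if every gate $\mathrm{CX}_{i,j}$ in it has $|i-j|=1$. A label is a subset of $\{1,\ldots,n\}$; for labels $a,b$, $ab$ denotes their symmetric difference. A label sequence $\ell=(\ell_1,\ldots,\ell_n)$ is acted on from the right: $\ell\,\mathrm{CX}_{i,j}$ replaces $\ell_j$ by $\ell_i\ell_j$; a moment applies its gates and a circuit applies its moments in order. With $C_{1,m}$ the first $m$ moments of $C$, $C$ generates a label set $L$ if every element of $L$ occurs as an entry of $\ell^0 C_{1,m}$ for some $m\geq 1$, where (by the paper's standing convention) the initial sequence is $\ell^0=(\{1\},\ldots,\{n\})$. $\mu(C,L)=\liminf_{n\to\infty}\operatorname{size}(C^{(n)})/|L^{(n)}|$. *)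

theory Defs
  imports Complex_Main "HOL-Library.Extended_Real" "HOL-Library.Liminf_Limsup"
begin

(* Qubits are 1..n.
   A label sequence is a function nat => nat set (only entries 1..n matter).
   A CNOT gate CX_{i,j} is the pair (i,j): control i, target j. *)

type_synonym label = "nat set"
type_synonym gate = "nat \<times> nat"
type_synonym moment = "gate list"
type_synonym circuit = "moment list"

definition symdiff :: "label \<Rightarrow> label \<Rightarrow> label" where
  "symdiff a b = (a - b) \<union> (b - a)"

definition gate_ok :: "nat \<Rightarrow> gate \<Rightarrow> bool" where
  "gate_ok n g \<longleftrightarrow> fst g \<in> {1..n} \<and> snd g \<in> {1..n} \<and> fst g \<noteq> snd g"

definition moment_ok :: "nat \<Rightarrow> moment \<Rightarrow> bool" where
  "moment_ok n M \<longleftrightarrow> (\<forall>g\<in>set M. gate_ok n g) \<and>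
     (\<forall>a<length M. \<forall>b<length M. a \<noteq> b \<longrightarrow>
        {fst (M!a), snd (M!a)} \<inter> {fst (M!b), snd (M!b)} = {})"

definition cnot_circuit :: "nat \<Rightarrow> circuit \<Rightarrow> bool" where
  "cnot_circuit n C \<longleftrightarrow> (\<forall>M\<in>set C. moment_ok n M)"

definition nearest_neighbor :: "circuit \<Rightarrow> bool" where
  "nearest_neighbor C \<longleftrightarrow>
     (\<forall>M\<in>set C. \<forall>g\<in>set M. fst g = snd g + 1 \<or> snd g = fst g + 1)"

definition circ_size :: "circuit \<Rightarrow> nat" where
  "circ_size C = sum_list (map length C)"

(* l CX_{i,j}: replaces l_j by l_i l_j *)
definition apply_gate :: "gate \<Rightarrow> (nat \<Rightarrow> label) \<Rightarrow> (nat \<Rightarrow> label)" where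
  "apply_gate g l = l(snd g := symdiff (l (fst g)) (l (snd g)))"

(* gates of a moment act on disjoint qubits, so the order is irrelevant *)
definition apply_moment :: "moment \<Rightarrow> (nat \<Rightarrow> label) \<Rightarrow> (nat \<Rightarrow> label)" where
  "apply_moment M l = fold apply_gate M l"

definition init_labels :: "nat \<Rightarrow> label" where
  "init_labels k = {k}"

definition run_prefix :: "circuit \<Rightarrow> nat \<Rightarrow> (nat \<Rightarrow> label)" where
  "run_prefix C m = fold apply_moment (take m C) init_labels"

definition generates :: "nat \<Rightarrow> circuit \<Rightarrow> label set \<Rightarrow> bool" where
  "generates n C L \<longleftrightarrow>
     (\<forall>a\<in>L. \<exists>m. 1 \<le> m \<and> m \<le> length C \<and> (\<exists>k\<in>{1..n}. run_prefix C m k = a))"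

definition mu :: "(nat \<Rightarrow> circuit) \<Rightarrow> (nat \<Rightarrow> label set) \<Rightarrow> ereal" where
  "mu C L = liminf (\<lambda>n. ereal (real (circ_size (C n)) / real (card (L n))))"

end

theory Submission
  imports Defs
begin

lemma symdiff_cancel[simp]: "symdiff a (symdiff a b) = b"
  unfolding symdiff_def by auto
lemma symdiff_comm: "symdiff a b = symdiff b a"
  unfolding symdiff_def by auto
lemma symdiff_assoc: "symdiff (symdiff a b) c = symdiff a (symdiff b c)"
  unfolding symdiff_def by auto

lemma symdiff_swap[simp]: "symdiff a (symdiff b (symdiff a x)) = symdiff b x"
  unfolding symdiff_def by auto

definition adj :: "nat \<Rightarrow> nat \<Rightarrow> bool" where
  "adj x y \<longleftrightarrow> x = y + 1 \<or> y = x + 1"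

lemma G3: "finite T \<Longrightarrow> card {t\<in>T. card {s\<in>T. s < (t::nat)} \<le> 2} \<le> 3"
proof -
  assume fT: "finite T"
  define f where "f t = card {s\<in>T. s < t}" for t
  have inj: "inj_on f T"
  proof (rule linorder_inj_onI)
    fix x y assume "x < y" "x \<in> T" "y \<in> T"
    hence "{s\<in>T. s < x} \<subset> {s\<in>T. s < y}" by auto
    thus "f x \<noteq> f y" unfolding f_def using psubset_card_mono[of "{s\<in>T. s < y}"] fT
      by (metis (no_types, lifting) finite_subset less_irrefl mem_Collect_eq subsetI)
  qed auto
  let ?M = "{t\<in>T. f t \<le> 2}"
  have "card ?M = card (f ` ?M)"
    using inj by (intro card_image[symmetric]) (auto intro: inj_on_subset)
  also have "\<dots> \<le> card {0..(2::nat)}" by (intro card_mono) auto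
  finally show ?thesis unfolding f_def by simp
qed

locale circ =
  fixes n :: nat and gs :: "gate list" and L :: "label set"
  assumes gok: "\<forall>g\<in>set gs. fst g \<in> {1..n} \<and> snd g \<in> {1..n} \<and> adj (fst g) (snd g)"
  and Lfree: "\<forall>l1\<in>L. \<forall>l2\<in>L. symdiff l1 l2 \<notin> L"
begin

definition X :: "nat \<Rightarrow> nat \<Rightarrow> label" where
  "X t = fold apply_gate (take t gs) init_labels"
definition c :: "nat \<Rightarrow> nat" where "c t = fst (gs ! t)"
definition d :: "nat \<Rightarrow> nat" where "d t = snd (gs ! t)"
definition out :: "nat \<Rightarrow> label" where "out t = symdiff (X t (c t)) (X t (d t))"
definition Seen :: "nat \<Rightarrow> label set" where "Seen t = {X s w | s w. s \<le> t}"
definition Prod :: "nat set" where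
  "Prod = {t. t < length gs \<and> out t \<in> L \<and> out t \<notin> Seen t}"
definition U :: "nat set" where "U = {t. t < length gs \<and> t \<notin> Prod}"
definition A :: "nat set" where "A = {t\<in>Prod. X t (d t) \<notin> L}"
definition B :: "nat set" where "B = {t\<in>Prod. X t (d t) \<in> L}"

lemma X_Suc: "t < length gs \<Longrightarrow> X (Suc t) = (X t)(d t := out t)"
  unfolding X_def out_def c_def d_def
  by (simp add: take_Suc_conv_app_nth apply_gate_def)

lemma X_ge: "length gs \<le> t \<Longrightarrow> X t = X (length gs)"
  unfolding X_def by simp

lemma gate_props: "t < length gs \<Longrightarrow> c t \<in> {1..n} \<and> d t \<in> {1..n} \<and> adj (c t) (d t)"
  using gok nth_mem unfolding c_def d_def by blast

lemma c_ne_d: "t < length gs \<Longrightarrow> c t \<noteq> d t"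
proof -
  assume "t < length gs"
  hence "adj (c t) (d t)" using gate_props by blast
  thus ?thesis unfolding adj_def by linarith
qed

lemma NC: "q \<le> r \<Longrightarrow> r \<le> length gs \<Longrightarrow> X r w \<noteq> X q w \<Longrightarrow>
   \<exists>s. q \<le> s \<and> s < r \<and> d s = w \<and> out s = X r w"
proof (induction r)
  case 0
  then show ?case by simp
next
  case (Suc r)
  show ?case
  proof (cases "q = Suc r")
    case True
    then show ?thesis using Suc by simp
  next
    case False
    hence qr: "q \<le> r" using Suc by simp
    have rS: "r < length gs" using Suc by simp
    show ?thesis
    proof (cases "d r = w")
      case True
      then show ?thesis using qr X_Suc[OF rS] by auto
    next
      case False
      hence "X (Suc r) w = X r w" using X_Suc[OF rS] by simp
      then obtain s where "q \<le> s \<and> s < r \<and> d s = w \<and> out s = X r w"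
        using Suc qr rS by auto
      then show ?thesis using \<open>X (Suc r) w = X r w\<close> by (metis less_Suc_eq)
    qed
  qed
qed

lemma NT: "q \<le> r \<Longrightarrow> r \<le> length gs \<Longrightarrow> (\<forall>s. q \<le> s \<and> s < r \<longrightarrow> d s \<noteq> w) \<Longrightarrow> X r w = X q w"
  using NC by blast


lemma CC:
  assumes r: "r \<in> B" and qr: "q \<le> r" and dq: "d q = d r"
    and noU: "\<forall>s. q < s \<and> s < r \<and> d s = c r \<longrightarrow> s \<notin> U"
  shows "X r (c r) = X q (c r)"
proof (rule ccontr)
  assume ne: "X r (c r) \<noteq> X q (c r)"
  have rS: "r < length gs" and outL: "out r \<in> L" and XL: "X r (d r) \<in> L"
    using r unfolding B_def Prod_def by auto
  have aL: "X r (c r) \<notin> L"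
    using Lfree outL XL unfolding out_def by blast
  obtain s where s: "q \<le> s" "s < r" "d s = c r" "out s = X r (c r)"
    using NC[OF qr _ ne] rS by auto
  have "s \<noteq> q" using s(3) dq c_ne_d[OF rS] by auto
  hence "s \<in> U" using s aL rS unfolding U_def Prod_def by auto
  thus False using noU s \<open>s \<noteq> q\<close> by auto
qed

lemma out_Suc: "q < length gs \<Longrightarrow> X (Suc q) (d q) = out q"
  using X_Suc by simp

lemma SL:
  assumes r: "r \<in> B" and qr: "q < r" and dq: "d q = d r" and cq: "c q = c r"
    and noJ: "\<forall>s. q < s \<and> s < r \<longrightarrow> d s \<noteq> d r"
    and noU: "\<forall>s. q < s \<and> s < r \<and> d s = c r \<longrightarrow> s \<notin> U"
  shows False
proof -
  have rS: "r < length gs" and nS: "out r \<notin> Seen r"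
    using r unfolding B_def Prod_def by auto
  have qS: "q < length gs" using qr rS by simp
  have a: "X r (c r) = X q (c r)" using CC[OF r _ dq noU] qr by simp
  have "X r (d r) = X (Suc q) (d r)"
    using NT[of "Suc q" r "d r"] noJ qr rS by auto
  also have "\<dots> = out q" using out_Suc[OF qS] dq by simp
  finally have "out r = symdiff (X q (c r)) (symdiff (X q (c q)) (X q (d q)))"
    unfolding out_def using a by simp
  hence "out r = X q (d q)" using cq by simp
  moreover have "X q (d q) \<in> Seen r" unfolding Seen_def using qr by auto
  ultimately show False using nS by simp
qed

lemma adj3: "adj x j \<Longrightarrow> adj y j \<Longrightarrow> adj z j \<Longrightarrow> x \<noteq> y \<Longrightarrow> y \<noteq> z \<Longrightarrow> x = z"
  unfolding adj_def by auto

lemma Key: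
  assumes t: "t \<in> B" and p1: "p1 \<in> B" and p2: "p2 \<in> B"
    and ord: "p3 < p2" "p2 < p1" "p1 < t"
    and dj: "d p3 = d t" "d p2 = d t" "d p1 = d t"
    and noJ: "\<forall>s. p3 < s \<and> s < t \<and> d s = d t \<longrightarrow> s = p2 \<or> s = p1"
  shows "\<exists>s. p3 < s \<and> s < t \<and> s \<in> U \<and> adj (d s) (d t)"
proof (rule ccontr)
  assume H: "\<not> ?thesis"
  have tS: "t < length gs" and nS: "out t \<notin> Seen t"
    using t unfolding B_def Prod_def by auto
  have S1: "p1 < length gs" "p2 < length gs" "p3 < length gs" using ord tS by auto
  have ac: "adj (c x) (d t)" if "x < length gs" "d x = d t" for x
    using gate_props[OF that(1)] that(2) by simp
  have noU: "\<forall>s. a < s \<and> s < b \<and> d s = c b \<longrightarrow> s \<notin> U"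
    if "p3 \<le> a" "b \<le> t" "b < length gs" "d b = d t" for a b
  proof (intro allI impI)
    fix s assume s: "a < s \<and> s < b \<and> d s = c b"
    have "p3 < s" "s < t" using s that by auto
    thus "s \<notin> U" using H ac[OF that(3,4)] s by auto
  qed
  have nJ: "d s \<noteq> d t" if "p3 < s" "s < t" "s \<noteq> p2" "s \<noteq> p1" for s
    using noJ that by blast
  have c12: "c p2 \<noteq> c p1"
  proof
    assume e: "c p2 = c p1"
    have A1: "\<forall>s. p2 < s \<and> s < p1 \<longrightarrow> d s \<noteq> d p1"
      using nJ ord dj by force
    have A2: "\<forall>s. p2 < s \<and> s < p1 \<and> d s = c p1 \<longrightarrow> s \<notin> U"
      using noU[of p2 p1] ord S1 dj by auto
    show False using SL[OF p1 ord(2) _ e A1 A2] dj by simp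
  qed
  have c1t: "c p1 \<noteq> c t"
  proof
    assume e: "c p1 = c t"
    have A1: "\<forall>s. p1 < s \<and> s < t \<longrightarrow> d s \<noteq> d t"
      using nJ ord dj by force
    have A2: "\<forall>s. p1 < s \<and> s < t \<and> d s = c t \<longrightarrow> s \<notin> U"
      using noU[of p1 t] ord tS dj by auto
    show False using SL[OF t ord(3) _ e A1 A2] dj by simp
  qed
  have c32: "c p3 \<noteq> c p2"
  proof
    assume e: "c p3 = c p2"
    have A1: "\<forall>s. p3 < s \<and> s < p2 \<longrightarrow> d s \<noteq> d p2"
      using nJ ord dj by force
    have A2: "\<forall>s. p3 < s \<and> s < p2 \<and> d s = c p2 \<longrightarrow> s \<notin> U"
      using noU[of p3 p2] ord S1 dj by auto
    show False using SL[OF p2 ord(1) _ e A1 A2] dj by simp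
  qed
  have e2: "c p2 = c t" using adj3[OF ac[OF S1(2) dj(2)] ac[OF S1(1) dj(3)] ac[OF tS refl]] c12 c1t by blast
  have e3: "c p3 = c p1" using adj3[OF ac[OF S1(3) dj(1)] ac[OF S1(2) dj(2)] ac[OF S1(1) dj(3)]] c32 c12 by blast
  have a2: "X t (c t) = X p2 (c t)"
    by (rule CC[OF t]) (use ord dj noU[of p2 t] tS in auto)
  have a1: "X p1 (c p1) = X p3 (c p1)"
    by (rule CC[OF p1]) (use ord dj noU[of p3 p1] S1 in auto)
  define j where "j = d t"
  have st1: "X p2 j = X (Suc p3) j"
    using NT[of "Suc p3" p2 j] nJ ord S1 unfolding j_def by fastforce
  have st2: "X p1 j = X (Suc p2) j"
    using NT[of "Suc p2" p1 j] nJ ord S1 unfolding j_def by fastforce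
  have st3: "X t j = X (Suc p1) j"
    using NT[of "Suc p1" t j] nJ ord tS unfolding j_def by fastforce
  have o3: "X (Suc p3) j = symdiff (X p3 (c p1)) (X p3 j)"
    using out_Suc[OF S1(3)] dj e3 unfolding out_def j_def by simp
  have o2: "X (Suc p2) j = symdiff (X p2 (c t)) (X p2 j)"
    using out_Suc[OF S1(2)] dj e2 unfolding out_def j_def by simp
  have o1: "X (Suc p1) j = symdiff (X p1 (c p1)) (X p1 j)"
    using out_Suc[OF S1(1)] dj unfolding out_def j_def by simp
  have "out t = symdiff (X t (c t)) (X t j)" unfolding out_def j_def by simp
  also have "\<dots> = X p3 j"
    using st1 st2 st3 o1 o2 o3 a1 a2 by simp
  finally have "out t = X p3 (d t)" unfolding j_def .
  moreover have "X p3 (d t) \<in> Seen t" unfolding Seen_def using ord by auto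
  ultimately show False using nS by simp
qed


definition T :: "nat \<Rightarrow> nat set" where "T j = {s. s < length gs \<and> d s = j}"

definition W :: "nat \<Rightarrow> nat set" where
  "W h = {t. t < length gs \<and> h < t \<and> (d t = d h \<or> adj (d t) (d h)) \<and>
             card {s. h < s \<and> s < t \<and> d s = d t} \<le> 2}"

lemma W_card: "card (W h) \<le> 9"
proof -
  define T' where "T' j = {s\<in>T j. h < s}" for j
  define J where "J = {d h - 1, d h, d h + 1}"
  have sub: "W h \<subseteq> (\<Union>j\<in>J. {t\<in>T' j. card {s\<in>T' j. s < t} \<le> 2})"
  proof
    fix t assume t: "t \<in> W h"
    hence tS: "t < length gs" by (simp add: W_def)
    have eq: "{s\<in>T' (d t). s < t} = {s. h < s \<and> s < t \<and> d s = d t}"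
      unfolding T'_def T_def using tS by auto
    have "d t \<in> J" using t unfolding W_def J_def adj_def by auto
    moreover have "t \<in> T' (d t)" using t unfolding T'_def T_def W_def by auto
    ultimately show "t \<in> (\<Union>j\<in>J. {t\<in>T' j. card {s\<in>T' j. s < t} \<le> 2})"
      using t eq unfolding W_def by auto
  qed
  have fin: "finite (T' j)" for j unfolding T'_def T_def by auto
  have "card (W h) \<le> card (\<Union>j\<in>J. {t\<in>T' j. card {s\<in>T' j. s < t} \<le> 2})"
    using sub by (intro card_mono) (auto simp: J_def fin)
  also have "\<dots> \<le> (\<Sum>j\<in>J. card {t\<in>T' j. card {s\<in>T' j. s < t} \<le> 2})"
    by (rule card_UN_le) (simp add: J_def)
  also have "\<dots> \<le> card J * 3"
    using sum_bounded_above[of J "\<lambda>j. card {t\<in>T' j. card {s\<in>T' j. s < t} \<le> 2}" 3] G3[OF fin]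
    by auto
  also have "\<dots> \<le> 9" using card_insert_le[of J] unfolding J_def
    by (simp add: card_insert_if)
  finally show ?thesis .
qed

definition E :: "nat set" where
  "E = {t\<in>B. card {s. s < t \<and> d s = d t} < 3}"

lemma E_card: "card E \<le> 3 * n"
proof -
  have sub: "E \<subseteq> (\<Union>j\<in>{1..n}. {t\<in>T j. card {s\<in>T j. s < t} \<le> 2})"
  proof
    fix t assume t: "t \<in> E"
    hence tS: "t < length gs" by (simp add: E_def B_def Prod_def)
    have eq: "{s\<in>T (d t). s < t} = {s. s < t \<and> d s = d t}"
      unfolding T_def using tS by auto
    have "d t \<in> {1..n}" using gate_props[OF tS] by blast
    moreover have "t \<in> T (d t)" using tS unfolding T_def by auto
    ultimately show "t \<in> (\<Union>j\<in>{1..n}. {t\<in>T j. card {s\<in>T j. s < t} \<le> 2})"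
      using t eq unfolding E_def by auto
  qed
  have fin: "finite (T j)" for j unfolding T_def by auto
  have "card E \<le> card (\<Union>j\<in>{1..n}. {t\<in>T j. card {s\<in>T j. s < t} \<le> 2})"
    using sub by (intro card_mono) (auto simp: fin)
  also have "\<dots> \<le> (\<Sum>j\<in>{1..n}. card {t\<in>T j. card {s\<in>T j. s < t} \<le> 2})"
    by (rule card_UN_le) simp
  also have "\<dots> \<le> n * 3"
    using sum_bounded_above[of "{1..n}" "\<lambda>j. card {t\<in>T j. card {s\<in>T j. s < t} \<le> 2}" 3] G3[OF fin]
    by auto
  finally show ?thesis by simp
qed


lemma part: "t < length gs \<Longrightarrow> t \<in> U \<or> t \<in> A \<or> t \<in> B"
  unfolding U_def A_def B_def by auto

lemma W_I: "t < length gs \<Longrightarrow> h < t \<Longrightarrow> (d t = d h \<or> adj (d t) (d h)) \<Longrightarrow>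
   card {s. h < s \<and> s < t \<and> d s = d t} \<le> 2 \<Longrightarrow> t \<in> W h"
  unfolding W_def by blast

lemma witness:
  assumes t: "t \<in> B" and nE: "t \<notin> E"
  shows "\<exists>h\<in>U \<union> A. t \<in> W h"
proof -
  define j where "j = d t"
  define Tt where "Tt = {s. s < t \<and> d s = j}"
  have tS: "t < length gs" using t by (simp add: B_def Prod_def)
  have fin: "finite Tt" unfolding Tt_def by auto
  have c3: "3 \<le> card Tt" using nE t unfolding E_def Tt_def j_def by auto
  define p1 where "p1 = Max Tt"
  have ne1: "Tt \<noteq> {}" using c3 by auto
  have p1: "p1 \<in> Tt" "\<forall>s\<in>Tt. s \<le> p1" using Max_in[OF fin ne1] Max_ge[OF fin] p1_def by auto
  define T2 where "T2 = Tt - {p1}"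
  have fin2: "finite T2" using fin T2_def by auto
  have c2: "2 \<le> card T2" using c3 p1 fin unfolding T2_def by (simp add: card_Diff_singleton)
  have ne2: "T2 \<noteq> {}" using c2 by auto
  define p2 where "p2 = Max T2"
  have p2: "p2 \<in> T2" "\<forall>s\<in>T2. s \<le> p2" using Max_in[OF fin2 ne2] Max_ge[OF fin2] p2_def by auto
  define T3 where "T3 = T2 - {p2}"
  have fin3: "finite T3" using fin2 T3_def by auto
  have "1 \<le> card T3" using c2 p2 fin2 unfolding T3_def by (simp add: card_Diff_singleton)
  hence ne3: "T3 \<noteq> {}" by auto
  define p3 where "p3 = Max T3"
  have p3: "p3 \<in> T3" "\<forall>s\<in>T3. s \<le> p3" using Max_in[OF fin3 ne3] Max_ge[OF fin3] p3_def by auto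
  have ord: "p3 < p2" "p2 < p1" "p1 < t"
    using p1 p2 p3 unfolding T3_def T2_def Tt_def by (auto simp: le_neq_implies_less)
  have dj: "d p3 = j" "d p2 = j" "d p1 = j"
    using p1 p2 p3 unfolding T3_def T2_def Tt_def by auto
  have between: "s = p2 \<or> s = p1" if "p3 < s" "s < t" "d s = j" for s
  proof (rule ccontr)
    assume "\<not> ?thesis"
    hence "s \<in> T3" using that unfolding T3_def T2_def Tt_def by auto
    thus False using p3 that by auto
  qed
  have after1: "\<not> (p1 < s \<and> s < t \<and> d s = j)" for s
  proof
    assume "p1 < s \<and> s < t \<and> d s = j"
    hence "s \<in> Tt" unfolding Tt_def by auto
    thus False using p1 \<open>p1 < s \<and> s < t \<and> d s = j\<close> by auto
  qed
  have S1: "p1 < length gs" "p2 < length gs" using ord tS by auto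
  show ?thesis
  proof (cases "p1 \<in> B")
    case False
    hence h: "p1 \<in> U \<union> A" using part[OF S1(1)] by auto
    have e: "{s. p1 < s \<and> s < t \<and> d s = d t} = {}" using after1 j_def by auto
    have c0: "card {s. p1 < s \<and> s < t \<and> d s = d t} = 0" by (subst e) (rule card.empty)
    hence c: "card {s. p1 < s \<and> s < t \<and> d s = d t} \<le> 2" by linarith
    have "t \<in> W p1" by (rule W_I[OF tS _ _ c]) (use ord dj j_def in auto)
    thus ?thesis using h by blast
  next
    case p1B: True
    show ?thesis
    proof (cases "p2 \<in> B")
      case False
      hence h: "p2 \<in> U \<union> A" using part[OF S1(2)] by auto
      have "{s. p2 < s \<and> s < t \<and> d s = d t} \<subseteq> {p1}"
      proof
        fix s assume "s \<in> {s. p2 < s \<and> s < t \<and> d s = d t}"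
        hence a: "p2 < s" "s < t" "d s = j" using j_def by auto
        have "p3 < s" using ord a(1) by linarith
        hence "s = p2 \<or> s = p1" using between a(2,3) by blast
        thus "s \<in> {p1}" using a(1) by auto
      qed
      hence "card {s. p2 < s \<and> s < t \<and> d s = d t} \<le> card {p1}"
        by (rule card_mono[rotated]) simp
      hence "card {s. p2 < s \<and> s < t \<and> d s = d t} \<le> 1" by simp
      hence c: "card {s. p2 < s \<and> s < t \<and> d s = d t} \<le> 2" by linarith
      have "t \<in> W p2" by (rule W_I[OF tS _ _ c]) (use ord dj j_def in auto)
      thus ?thesis using h by blast
    next
      case p2B: True
      have noJ: "\<forall>s. p3 < s \<and> s < t \<and> d s = d t \<longrightarrow> s = p2 \<or> s = p1"
        using between unfolding j_def by blast
      obtain h where h: "p3 < h" "h < t" "h \<in> U" "adj (d h) (d t)"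
        using Key[OF t p1B p2B ord dj[unfolded j_def] noJ] by blast
      have "{s. h < s \<and> s < t \<and> d s = d t} \<subseteq> {p1, p2}"
      proof
        fix s assume "s \<in> {s. h < s \<and> s < t \<and> d s = d t}"
        hence a: "h < s" "s < t" "d s = j" using j_def by auto
        have "p3 < s" using h(1) a(1) by linarith
        hence "s = p2 \<or> s = p1" using between a(2,3) by blast
        thus "s \<in> {p1, p2}" by auto
      qed
      hence "card {s. h < s \<and> s < t \<and> d s = d t} \<le> card {p1, p2}"
        by (rule card_mono[rotated]) simp
      also have "\<dots> \<le> 2" by (simp add: card_insert_if)
      finally have c: "card {s. h < s \<and> s < t \<and> d s = d t} \<le> 2" .
      have "adj (d t) (d h)" using h(4) unfolding adj_def by auto
      hence "t \<in> W h" using W_I[OF tS h(2) _ c] by blast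
      thus ?thesis using h by blast
    qed
  qed
qed

lemma B_card: "card B \<le> 3 * n + 9 * (card U + card A)"
proof -
  have finUA: "finite (U \<union> A)" unfolding U_def A_def Prod_def by auto
  have sB: "B \<subseteq> E \<union> (\<Union>h\<in>U \<union> A. W h)" using witness by blast
  have "card B \<le> card (E \<union> (\<Union>h\<in>U \<union> A. W h))"
  proof (rule card_mono)
    have "E \<subseteq> {..<length gs}" unfolding E_def B_def Prod_def by auto
    moreover have "W h \<subseteq> {..<length gs}" for h unfolding W_def by auto
    ultimately have "E \<union> (\<Union>h\<in>U \<union> A. W h) \<subseteq> {..<length gs}" by blast
    thus "finite (E \<union> (\<Union>h\<in>U \<union> A. W h))" using finite_subset by blast
  qed (rule sB)
  also have "\<dots> \<le> card E + card (\<Union>h\<in>U \<union> A. W h)" by (rule card_Un_le)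
  also have "card (\<Union>h\<in>U \<union> A. W h) \<le> (\<Sum>h\<in>U \<union> A. card (W h))"
    by (rule card_UN_le[OF finUA])
  also have "\<dots> \<le> card (U \<union> A) * 9"
    using sum_bounded_above[of "U \<union> A" "\<lambda>h. card (W h)" 9] W_card by auto
  also have "card (U \<union> A) \<le> card U + card A" by (rule card_Un_le)
  finally show ?thesis using E_card by linarith
qed


definition F :: "nat \<Rightarrow> nat set" where "F t = {w\<in>{1..n}. X t w \<notin> L}"

lemma F_step:
  assumes tS: "t < length gs"
  shows "card (F (Suc t)) + (if t \<in> A then 1 else 0) \<le> card (F t) + (if t \<in> U then 1 else 0)"
proof -
  define j where "j = d t"
  have j: "j \<in> {1..n}" using gate_props[OF tS] j_def by auto
  have XS: "X (Suc t) = (X t)(j := out t)" using X_Suc[OF tS] j_def by simp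
  have finF: "finite (F t)" unfolding F_def by auto
  show ?thesis
  proof (cases "out t \<in> L")
    case True
    hence e: "F (Suc t) = F t - {j}" unfolding F_def XS by auto
    show ?thesis
    proof (cases "t \<in> A")
      case True
      hence "j \<in> F t" using j unfolding A_def F_def j_def by auto
      hence "card (F (Suc t)) + 1 = card (F t)" unfolding e using finF
        by (simp add: card_Diff_singleton) (metis One_nat_def Suc_pred card_gt_0_iff empty_iff)
      thus ?thesis using True by simp
    next
      case False
      have "card (F (Suc t)) \<le> card (F t)" unfolding e using finF by (intro card_mono) auto
      thus ?thesis using False by simp
    qed
  next
    case False
    hence nP: "t \<notin> Prod" "t \<notin> A" "t \<in> U" unfolding Prod_def A_def U_def using tS by auto
    have e: "F (Suc t) \<subseteq> insert j (F t)" unfolding F_def XS by auto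
    have "card (F (Suc t)) \<le> card (insert j (F t))" using e finF by (intro card_mono) auto
    also have "\<dots> \<le> card (F t) + 1" using finF by (simp add: card_insert_if)
    finally show ?thesis using nP by simp
  qed
qed

lemma F_sum: "N \<le> length gs \<Longrightarrow> card (F N) + card {t\<in>A. t < N} \<le> card (F 0) + card {t\<in>U. t < N}"
proof (induction N)
  case 0
  then show ?case by simp
next
  case (Suc N)
  have NS: "N < length gs" using Suc by simp
  have fa: "finite {t\<in>A. t < N}" "finite {t\<in>U. t < N}" by auto
  have ea: "{t\<in>A. t < Suc N} = (if N \<in> A then insert N {t\<in>A. t < N} else {t\<in>A. t < N})"
    by (auto simp: less_Suc_eq)
  have eu: "{t\<in>U. t < Suc N} = (if N \<in> U then insert N {t\<in>U. t < N} else {t\<in>U. t < N})"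
    by (auto simp: less_Suc_eq)
  have ca: "card {t\<in>A. t < Suc N} = card {t\<in>A. t < N} + (if N \<in> A then 1 else 0)"
    unfolding ea using fa by auto
  have cu: "card {t\<in>U. t < Suc N} = card {t\<in>U. t < N} + (if N \<in> U then 1 else 0)"
    unfolding eu using fa by auto
  show ?case using Suc.IH NS F_step[OF NS] ca cu by simp
qed

lemma A_card: "card A \<le> n + card U"
proof -
  have "card (F (length gs)) + card {t\<in>A. t < length gs} \<le> card (F 0) + card {t\<in>U. t < length gs}"
    by (rule F_sum) simp
  moreover have "{t\<in>A. t < length gs} = A" unfolding A_def Prod_def by auto
  moreover have "{t\<in>U. t < length gs} = U" unfolding U_def by auto
  moreover have "card (F 0) \<le> n"
  proof -
    have "card (F 0) \<le> card {1..n}" unfolding F_def by (intro card_mono) auto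
    thus ?thesis by simp
  qed
  ultimately have "card (F (length gs)) + card A \<le> card (F 0) + card U" by simp
  thus ?thesis using \<open>card (F 0) \<le> n\<close> by linarith
qed

lemma partition_card: "card U + card A + card B = length gs"
proof -
  have fin: "finite U" "finite A" "finite B" unfolding U_def A_def B_def Prod_def by auto
  have "U \<union> A \<union> B = {..<length gs}" unfolding U_def A_def B_def Prod_def by auto
  moreover have "card (U \<union> A) = card U + card A"
    using fin by (intro card_Un_disjoint) (auto simp: U_def A_def)
  moreover have "card (U \<union> A \<union> B) = card (U \<union> A) + card B"
    using fin by (intro card_Un_disjoint) (auto simp: U_def A_def B_def)
  ultimately show ?thesis by simp
qed

lemma Prod_card: "card Prod = card A + card B"
proof -
  have "Prod = A \<union> B" unfolding A_def B_def by auto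
  moreover have "finite A" "finite B" unfolding A_def B_def Prod_def by auto
  moreover have "A \<inter> B = {}" unfolding A_def B_def by auto
  ultimately show ?thesis by (simp add: card_Un_disjoint)
qed

lemma L_card:
  assumes Lsub: "L \<subseteq> Pow {1..n}"
    and gen: "\<forall>a\<in>L. \<exists>m k. m \<le> length gs \<and> X m k = a"
  shows "card L \<le> n + card Prod"
proof -
  have sub: "L \<subseteq> (\<lambda>w. {w}) ` {1..n} \<union> out ` Prod"
  proof
    fix a assume aL: "a \<in> L"
    obtain m0 k0 where mk: "m0 \<le> length gs" "X m0 k0 = a" using gen aL by blast
    define m where "m = (LEAST m. \<exists>k. X m k = a)"
    have ex: "\<exists>k. X m k = a" unfolding m_def by (rule LeastI[of _ m0]) (use mk in blast)
    have mle: "m \<le> m0" unfolding m_def by (rule Least_le) (use mk in blast)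
    have minm: "\<not> (\<exists>k. X m' k = a)" if "m' < m" for m'
      using not_less_Least[of m' "\<lambda>m. \<exists>k. X m k = a"] that unfolding m_def by blast
    show "a \<in> (\<lambda>w. {w}) ` {1..n} \<union> out ` Prod"
    proof (cases m)
      case 0
      then obtain k where "X 0 k = a" using ex by auto
      hence "a = {k}" unfolding X_def init_labels_def by auto
      hence "k \<in> {1..n}" using aL Lsub by auto
      thus ?thesis using \<open>a = {k}\<close> by auto
    next
      case (Suc t)
      obtain k where k: "X (Suc t) k = a" using ex Suc by auto
      have tS: "t < length gs"
      proof (rule ccontr)
        assume "\<not> t < length gs"
        hence "X (Suc t) = X t" using X_ge[of t] X_ge[of "Suc t"] by simp
        thus False using minm[of t] k Suc by auto
      qed
      have kd: "k = d t"
      proof (rule ccontr)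
        assume "k \<noteq> d t"
        hence "X t k = a" using k X_Suc[OF tS] by simp
        thus False using minm[of t] Suc by auto
      qed
      have ao: "a = out t" using k kd X_Suc[OF tS] by simp
      have "a \<notin> Seen t"
      proof
        assume "a \<in> Seen t"
        then obtain s w where "s \<le> t" "X s w = a" unfolding Seen_def by auto
        thus False using minm[of s] Suc by auto
      qed
      hence "t \<in> Prod" unfolding Prod_def using tS ao aL by auto
      thus ?thesis using ao by auto
    qed
  qed
  have "card L \<le> card ((\<lambda>w. {w}) ` {1..n} \<union> out ` Prod)"
    by (rule card_mono[OF _ sub]) (auto simp: Prod_def)
  also have "\<dots> \<le> card ((\<lambda>w. {w}) ` {1..n}) + card (out ` Prod)" by (rule card_Un_le)
  also have "card ((\<lambda>w. {w}) ` {1..n}) \<le> n" using card_image_le[of "{1..n}" "\<lambda>w. {w}"] by simp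
  also have "card (out ` Prod) \<le> card Prod" by (rule card_image_le) (auto simp: Prod_def)
  finally show ?thesis by linarith
qed

theorem bound:
  assumes Lsub: "L \<subseteq> Pow {1..n}"
    and gen: "\<forall>a\<in>L. \<exists>m k. m \<le> length gs \<and> X m k = a"
  shows "20 * card L \<le> 33 * n + 19 * length gs"
proof -
  have "card L \<le> n + card Prod" by (rule L_card[OF Lsub gen])
  moreover have "card A \<le> n + card U" by (rule A_card)
  moreover have "card B \<le> 3 * n + 9 * card U + 9 * card A" using B_card by simp
  moreover have "card U + card A + card B = length gs" by (rule partition_card)
  moreover have "card Prod = card A + card B" by (rule Prod_card)
  ultimately show ?thesis by linarith
qed


theorem bound':
  assumes Lsub: "L \<subseteq> Pow {1..n}"
    and gen: "\<forall>a\<in>L. \<exists>m k. m \<le> length gs \<and> fold apply_gate (take m gs) init_labels k = a"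
  shows "20 * card L \<le> 33 * n + 19 * length gs"
  by (rule bound[OF Lsub]) (use gen in \<open>simp add: X_def\<close>)

end

lemma fold_moments: "fold apply_moment Ms l = fold apply_gate (concat Ms) l"
  by (induction Ms arbitrary: l) (simp_all add: apply_moment_def)

lemma run_prefix_eq: "run_prefix C m = fold apply_gate (take (length (concat (take m C))) (concat C)) init_labels"
proof -
  have "concat C = concat (take m C) @ concat (drop m C)"
    by (metis append_take_drop_id concat_append)
  hence "take (length (concat (take m C))) (concat C) = concat (take m C)" by simp
  thus ?thesis unfolding run_prefix_def fold_moments by simp
qed

lemma per_n:
  assumes Lsub: "L \<subseteq> Pow {1..n}"
    and Lf: "\<forall>l1\<in>L. \<forall>l2\<in>L. symdiff l1 l2 \<notin> L"
    and cc: "cnot_circuit n C" and nn: "nearest_neighbor C" and g: "generates n C L"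
  shows "20 * card L \<le> 33 * n + 19 * circ_size C"
proof -
  define gs where "gs = concat C"
  have gok: "\<forall>g\<in>set gs. fst g \<in> {1..n} \<and> snd g \<in> {1..n} \<and> adj (fst g) (snd g)"
  proof
    fix g assume "g \<in> set gs"
    then obtain M where M: "M \<in> set C" "g \<in> set M" unfolding gs_def by auto
    have "gate_ok n g" using cc M unfolding cnot_circuit_def moment_ok_def by blast
    moreover have "fst g = snd g + 1 \<or> snd g = fst g + 1" using nn M unfolding nearest_neighbor_def by blast
    ultimately show "fst g \<in> {1..n} \<and> snd g \<in> {1..n} \<and> adj (fst g) (snd g)"
      unfolding gate_ok_def adj_def by auto
  qed
  interpret circ n gs L using gok Lf by unfold_locales
  have gen: "\<forall>a\<in>L. \<exists>m k. m \<le> length gs \<and> fold apply_gate (take m gs) init_labels k = a"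
  proof
    fix a assume "a \<in> L"
    then obtain m k where "run_prefix C m k = a" using g unfolding generates_def by blast
    hence "fold apply_gate (take (length (concat (take m C))) gs) init_labels k = a"
      unfolding run_prefix_eq gs_def .
    moreover have "length (concat (take m C)) \<le> length gs"
    proof -
      have "concat C = concat (take m C) @ concat (drop m C)"
        by (metis append_take_drop_id concat_append)
      hence "length (concat C) = length (concat (take m C)) + length (concat (drop m C))"
        by (metis length_append)
      thus ?thesis unfolding gs_def by linarith
    qed
    ultimately show "\<exists>m k. m \<le> length gs \<and> fold apply_gate (take m gs) init_labels k = a" by blast
  qed
  have "length gs = circ_size C" unfolding gs_def circ_size_def by (simp add: length_concat)
  thus ?thesis using bound'[OF Lsub gen] by simp
qed

theorem mainTheorem2:
  shows "\<exists>\<gamma>::real. \<gamma> > 0 \<and>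
    (\<forall>(L :: nat \<Rightarrow> label set) (C :: nat \<Rightarrow> circuit).
       (\<forall>n. L n \<subseteq> Pow {1..n}) \<longrightarrow>
       (\<forall>n. \<forall>l1\<in>L n. \<forall>l2\<in>L n. symdiff l1 l2 \<notin> L n) \<longrightarrow>
       filterlim (\<lambda>n. real (card (L n)) / real n) at_top sequentially \<longrightarrow>
       (\<forall>n. cnot_circuit n (C n) \<and> nearest_neighbor (C n) \<and> generates n (C n) (L n)) \<longrightarrow>
       mu C L \<ge> ereal (1 + \<gamma>))"
proof (intro exI[of _ "1/38"] conjI allI impI)
  show "(0::real) < 1/38" by simp
  fix L :: "nat \<Rightarrow> label set" and C :: "nat \<Rightarrow> circuit"
  assume Lsub: "\<forall>n. L n \<subseteq> Pow {1..n}"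
    and Lf: "\<forall>n. \<forall>l1\<in>L n. \<forall>l2\<in>L n. symdiff l1 l2 \<notin> L n"
    and lim: "filterlim (\<lambda>n. real (card (L n)) / real n) at_top sequentially"
    and CC: "\<forall>n. cnot_circuit n (C n) \<and> nearest_neighbor (C n) \<and> generates n (C n) (L n)"
  have bnd: "20 * card (L n) \<le> 33 * n + 19 * circ_size (C n)" for n
    using per_n[of "L n" n "C n"] Lsub Lf CC by blast
  have ev: "eventually (\<lambda>n. 66 \<le> real (card (L n)) / real n) sequentially"
    using lim unfolding filterlim_at_top by blast
  have "eventually (\<lambda>n. ereal (1 + 1/38) \<le> ereal (real (circ_size (C n)) / real (card (L n)))) sequentially"
  proof (rule eventually_mono[OF ev])
    fix n assume h: "66 \<le> real (card (L n)) / real n"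
    have npos: "n > 0" using h by (cases "n = 0") auto
    hence cL: "66 * real n \<le> real (card (L n))" using h by (simp add: field_simps)
    hence cpos: "real (card (L n)) > 0" using npos by linarith
    have b: "20 * real (card (L n)) \<le> 33 * real n + 19 * real (circ_size (C n))"
    proof -
      have "real (20 * card (L n)) \<le> real (33 * n + 19 * circ_size (C n))"
        using bnd[of n] by (rule of_nat_mono)
      thus ?thesis by simp
    qed
    have "39 * real (card (L n)) \<le> 38 * real (circ_size (C n))" using b cL by linarith
    hence "1 + 1/38 \<le> real (circ_size (C n)) / real (card (L n))"
      using cpos by (simp add: field_simps)
    thus "ereal (1 + 1/38) \<le> ereal (real (circ_size (C n)) / real (card (L n)))" by simp
  qed
  hence "ereal (1 + 1/38) \<le> liminf (\<lambda>n. ereal (real (circ_size (C n)) / real (card (L n))))"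
    by (rule Liminf_bounded)
  thus "ereal (1 + 1/38) \<le> mu C L" unfolding mu_def .
qed

end
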